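(* Let $m\ge1$ be an integer and for each $s\in(0,m)$ let $\sigma_s$ be a Borel probability measure on $\mathbb S^{N-1}$. Then $$\lim_{s\to m^-}\frac{c_{m,s}}{m-s}M_{s,\sigma_s}(e_s)=4.$$
   Context: $\nu_s(U)=\int_0^\infty\int_{\mathbb S^{N-1}}\chi_U(r\theta)r^{-1-2s}\sigma_s(d\theta)\,dr$; $M_{s,\sigma}(e)=\int|e\cdot\theta|^{2s}\sigma(d\theta)$; $e_s$ is a maximum point of $M_{s,\sigma_s}$ on $\mathbb S^{N-1}$; for an integer $m>s$, $c_{m,s}>0$ is defined by $\frac2{c_{m,s}}=2^m\int_{\mathbb R^N}(1-\cos(e_s\cdot y))^m\nu_s(dy)$. *)

theory Defs
  imports "HOL-Probability.Probability"
begin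

text \<open>The unit sphere S^{N-1} in the Euclidean space 'a (of dimension N = DIM('a)).\<close>
abbreviation unit_sphere :: "'a::euclidean_space set" where
  "unit_sphere \<equiv> sphere 0 1"

definition borel_prob_on_sphere :: "'a::euclidean_space measure \<Rightarrow> bool" where
  "borel_prob_on_sphere \<sigma> \<longleftrightarrow>
     prob_space \<sigma> \<and> sets \<sigma> = sets (restrict_space borel (unit_sphere :: 'a set))"

text \<open>nu_s(U) = int_0^infty int_S chi_U(r theta) r^(-1-2s) sigma(d theta) dr,
  realised as the push-forward of (r^(-1-2s) dr on (0,infty)) x sigma under (r,theta) -> r theta.\<close>
definition nu_meas :: "real \<Rightarrow> 'a::euclidean_space measure \<Rightarrow> 'a measure" where
  "nu_meas s \<sigma> =
     distr ((density (restrict_space lborel {0<..}) (\<lambda>r. ennreal (r powr (- 1 - 2 * s)))) \<Otimes>\<^sub>M \<sigma>)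
           borel (\<lambda>(r, \<theta>). r *\<^sub>R \<theta>)"

definition M_fun :: "real \<Rightarrow> 'a::euclidean_space measure \<Rightarrow> 'a \<Rightarrow> real" where
  "M_fun s \<sigma> e = (\<integral>\<theta>. \<bar>e \<bullet> \<theta>\<bar> powr (2 * s) \<partial>\<sigma>)"

definition c_const :: "nat \<Rightarrow> real \<Rightarrow> 'a::euclidean_space measure \<Rightarrow> 'a \<Rightarrow> real" where
  "c_const m s \<sigma> e = 2 / (2^m * (\<integral>y. (1 - cos (e \<bullet> y))^m \<partial>(nu_meas s \<sigma>)))"

end

theory Submission
  imports Defs
begin
lemma cos_ub4: "cos (x::real) \<le> 1 - x^2/2 + x^4/24"
proof -
  obtain t where t: "cos x = (\<Sum>m<4. cos_coeff m * x ^ m) + (cos(t + 1/2 * real 4 * pi) / fact 4) * x ^ 4"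
    using Maclaurin_cos_expansion[of x 4] by blast
  have s: "(\<Sum>m<4. cos_coeff m * x ^ m) = 1 - x^2/2"
  proof -
    have h: "\<not> (2::nat) dvd 3" by simp
    show ?thesis using h[unfolded eval_nat_numeral] by (simp add: eval_nat_numeral cos_coeff_def)
  qed
  have "(cos(t + 1/2 * real 4 * pi) / fact 4) * x ^ 4 \<le> x^4/24"
  proof -
    have "0 \<le> x*(x*(x*x))" by (metis mult.assoc zero_le_square)
    then show ?thesis using mult_right_mono[of "cos t" 1 "x*(x*(x*x))"] by (simp add: eval_nat_numeral)
  qed
  then show ?thesis using t s by simp
qed
lemma cos_lb2: "1 - x^2/2 \<le> cos (x::real)"
proof -
  obtain t where t: "cos x = (\<Sum>m<2. cos_coeff m * x ^ m) + (cos(t + 1/2 * real 2 * pi) / fact 2) * x ^ 2"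
    using Maclaurin_cos_expansion[of x 2] by blast
  have s: "(\<Sum>m<2. cos_coeff m * x ^ m) = 1"
    by (simp add: eval_nat_numeral cos_coeff_def)
  have "(cos(t + 1/2 * real 2 * pi) / fact 2) * x ^ 2 \<ge> - (x^2/2)"
    using mult_right_mono[of "cos t" 1 "x*x"] by (simp add: eval_nat_numeral)
  then show ?thesis using t s by simp
qed

definition Kf :: "nat \<Rightarrow> real \<Rightarrow> real \<Rightarrow> real" where
  "Kf m s t = indicator {0<..} t * ((1 - cos t)^m * t powr (- 1 - 2 * s))"

definition Kn :: "nat \<Rightarrow> real \<Rightarrow> ennreal" where
  "Kn m s = (\<integral>\<^sup>+ t. ennreal (Kf m s t) \<partial>lborel)"

lemma Kf_nonneg: "0 \<le> Kf m s t"
  by (simp add: Kf_def indicator_def)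

lemma Kf_meas[measurable]: "Kf m s \<in> borel_measurable borel"
  unfolding Kf_def by measurable

lemma Kf_upper:
  assumes "0 < s" "s < real m"
  shows "ennreal (Kf m s t) \<le> ennreal (t powr (2 * (real m - s) - 1) * (1/2^m)) * indicator {0..1} t
             + ennreal (t powr (- 1 - 2 * s) * 2^m) * indicator {1..} t"
proof (cases "t \<le> 0")
  case True then show ?thesis by (simp add: Kf_def indicator_def)
next
  case False
  then have tp: "0 < t" by simp
  have c0: "0 \<le> 1 - cos t" by simp
  show ?thesis
  proof (cases "t \<le> 1")
    case True
    have "(1 - cos t)^m \<le> (t^2/2)^m"
      using cos_lb2[of t] c0 by (intro power_mono) auto
    then have "Kf m s t \<le> (t^2/2)^m * t powr (- 1 - 2 * s)"
      using tp by (simp add: Kf_def mult_right_mono)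
    also have "\<dots> = t powr (2 * (real m - s) - 1) * (1/2^m)"
    proof -
      have "(t^2/2)^m = t powr (2 * real m) / 2^m"
      proof -
        have "(t^2/2)^m = t^(2*m) / 2^m" by (simp add: power_divide power_mult)
        also have "t^(2*m) = t powr (real (2*m))" using tp by (rule powr_realpow[symmetric])
        finally show ?thesis by simp
      qed
      moreover have "t powr (2 * real m) * t powr (- 1 - 2 * s) = t powr (2 * (real m - s) - 1)"
        by (simp add: powr_add[symmetric] algebra_simps)
      ultimately show ?thesis by simp
    qed
    finally have "Kf m s t \<le> t powr (2 * (real m - s) - 1) * (1/2^m)" .
    then have "ennreal (Kf m s t) \<le> ennreal (t powr (2 * (real m - s) - 1) * (1/2^m)) * indicator {0..1} t"
      using True tp by (simp add: indicator_def ennreal_leI)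
    then show ?thesis by (rule order_trans) simp
  next
    case False
    have "(1 - cos t)^m \<le> 2^m"
      by (rule power_mono) (use cos_ge_minus_one[of t] cos_le_one[of t] in linarith)+
    then have "Kf m s t \<le> t powr (- 1 - 2 * s) * 2^m"
      using tp by (simp add: Kf_def mult_right_mono mult.commute)
    then have "ennreal (Kf m s t) \<le> ennreal (t powr (- 1 - 2 * s) * 2^m) * indicator {1..} t"
      using False tp by (simp add: indicator_def ennreal_leI)
    then show ?thesis by (rule order_trans) simp
  qed
qed

lemma Kn_upper:
  assumes "0 < s" "s < real m"
  shows "Kn m s \<le> ennreal (1 / (2 * (real m - s)) * (1/2^m) + 2^m / (2 * s))"
proof -
  have "Kn m s \<le> (\<integral>\<^sup>+ t. ennreal (t powr (2 * (real m - s) - 1) * (1/2^m)) * indicator {0..1} t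
             + ennreal (t powr (- 1 - 2 * s) * 2^m) * indicator {1..} t \<partial>lborel)"
    unfolding Kn_def by (intro nn_integral_mono Kf_upper assms)
  also have "\<dots> = (\<integral>\<^sup>+ t. ennreal (t powr (2 * (real m - s) - 1) * (1/2^m)) * indicator {0..1} t \<partial>lborel)
       + (\<integral>\<^sup>+ t. ennreal (t powr (- 1 - 2 * s) * 2^m) * indicator {1..} t \<partial>lborel)"
    by (rule nn_integral_add) auto
  also have "(\<integral>\<^sup>+ t. ennreal (t powr (2 * (real m - s) - 1) * (1/2^m)) * indicator {0..1} t \<partial>lborel)
      = ennreal (1 / (2 * (real m - s)) * (1/2^m))"
  proof (rule nn_integral_has_integral_lebesgue')
    show "((\<lambda>t. t powr (2 * (real m - s) - 1) * (1/2^m)) has_integral (1 / (2 * (real m - s)) * (1/2^m))) {0..1}"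
      using has_integral_mult_left[OF has_integral_powr_from_0[of "2 * (real m - s) - 1" 1], of "1/2^m"] assms
      by simp
  qed auto
  also have "(\<integral>\<^sup>+ t. ennreal (t powr (- 1 - 2 * s) * 2^m) * indicator {1..} t \<partial>lborel)
      = ennreal (2^m / (2 * s))"
  proof (rule nn_integral_has_integral_lebesgue')
    show "((\<lambda>t. t powr (- 1 - 2 * s) * 2^m) has_integral (2^m / (2 * s))) {1..}"
      using has_integral_mult_left[OF has_integral_powr_to_inf[of "-1-2 * s" 1], of "2^m"] assms
      by simp
  qed auto
  also have "ennreal (1 / (2 * (real m - s)) * (1/2^m)) + ennreal (2^m / (2 * s))
      = ennreal (1 / (2 * (real m - s)) * (1/2^m) + 2^m / (2 * s))"
    by (rule ennreal_plus[symmetric]) (use assms in simp_all)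
  finally show ?thesis .
qed

lemma powr_shift2: "0 < (t::real) \<Longrightarrow> t powr (a + 2) = t powr a * t^2"
  by (simp add: powr_add powr_numeral)

lemma Kf_lower:
  assumes "0 < s" "s < real m" "m \<ge> 1"
  shows "ennreal ((t powr (2 * (real m - s) - 1) - real m / 12 * t powr (2 * (real m - s) + 1)) * (1/2^m))
           * indicator {0..1/real m} t \<le> ennreal (Kf m s t)"
proof (cases "0 < t \<and> t \<le> 1/real m")
  case False
  then show ?thesis
    by (cases "t = 0") (auto simp: indicator_def)
next
  case True
  then have tp: "0 < t" and tr: "t \<le> 1/real m" by auto
  have "1/real m \<le> 1" using assms(3) by simp
  then have t1: "t \<le> 1" using tr by linarith
  have tt: "t^2 \<le> 1" using t1 tp by (simp add: power_le_one)
  let ?u = "t^2/2"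
  have h1: "?u * (1 - t^2/12) \<le> 1 - cos t"
  proof -
    have e4: "t^4 = t^2 * t^2" by (simp add: eval_nat_numeral)
    have "?u * (1 - t^2/12) = t^2/2 - t^4/24" unfolding e4 by (simp add: algebra_simps)
    then show ?thesis using cos_ub4[of t] by linarith
  qed
  have h0: "0 \<le> ?u * (1 - t^2/12)" using tt by simp
  have "(?u * (1 - t^2/12))^m \<le> (1 - cos t)^m"
    by (rule power_mono[OF h1 h0])
  moreover have "?u^m * (1 - real m * t^2/12) \<le> ?u^m * (1 - t^2/12)^m"
  proof (rule mult_left_mono)
    show "1 - real m * t^2 / 12 \<le> (1 - t^2 / 12) ^ m"
      using Bernoulli_inequality[of "-(t^2/12)" m] tt by simp
  qed simp
  moreover have "(?u * (1 - t^2/12))^m = ?u^m * (1 - t^2/12)^m" by (rule power_mult_distrib)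
  ultimately have A: "?u^m * (1 - real m * t^2/12) \<le> (1 - cos t)^m"
    by linarith
  have B: "?u^m = t powr (2 * real m) / 2^m"
  proof -
    have "(t^2/2)^m = t^(2*m) / 2^m" by (simp add: power_divide power_mult)
    also have "t^(2*m) = t powr (real (2*m))" using tp by (rule powr_realpow[symmetric])
    finally show ?thesis by simp
  qed
  have C: "t powr (2 * real m) * t powr (- 1 - 2 * s) = t powr (2 * (real m - s) - 1)"
    by (simp add: powr_add[symmetric] algebra_simps)
  have D: "t powr (2 * (real m - s) + 1) = t powr (2 * (real m - s) - 1) * t^2"
  proof -
    have E: "2 * (real m - s) + 1 = (2 * (real m - s) - 1) + 2" by simp
    show ?thesis by (simp only: E powr_shift2[OF tp])
  qed
  have "(t powr (2 * (real m - s) - 1) - real m / 12 * t powr (2 * (real m - s) + 1)) * (1/2^m)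
      = ?u^m * (1 - real m * t^2/12) * t powr (- 1 - 2 * s)"
    unfolding B D using C[symmetric] by (simp add: algebra_simps)
  also have "\<dots> \<le> (1 - cos t)^m * t powr (- 1 - 2 * s)"
    using A by (rule mult_right_mono) simp
  also have "\<dots> = Kf m s t" using tp by (simp add: Kf_def)
  finally show ?thesis using True by (simp add: indicator_def ennreal_leI)
qed

definition Klow :: "nat \<Rightarrow> real \<Rightarrow> real" where
  "Klow m s = ((1/real m) powr (2 * (real m - s)) / (2 * (real m - s))
       - real m / 12 * ((1/real m) powr (2 * (real m - s) + 2) / (2 * (real m - s) + 2))) * (1/2^m)"

lemma Kn_lower:
  assumes "0 < s" "s < real m" "m \<ge> 1"
  shows "ennreal (Klow m s) \<le> Kn m s"
proof -
  let ?q = "real m - s"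
  let ?r = "1 / real m"
  let ?g = "\<lambda>t. (t powr (2 * ?q - 1) - real m / 12 * t powr (2 * ?q + 1)) * (1/2^m)"
  have r0: "0 \<le> ?r" by simp
  have int: "(?g has_integral Klow m s) {0..?r}"
  proof -
    have e1: "2 * ?q - 1 + 1 = 2 * ?q" by simp
    have e2: "2 * ?q + 1 + 1 = 2 * ?q + 2" by simp
    have i1: "((\<lambda>t. t powr (2 * ?q - 1)) has_integral (?r powr (2 * ?q - 1 + 1) / (2 * ?q - 1 + 1))) {0..?r}"
      by (rule has_integral_powr_from_0) (use assms in auto)
    have i2: "((\<lambda>t. t powr (2 * ?q + 1)) has_integral (?r powr (2 * ?q + 1 + 1) / (2 * ?q + 1 + 1))) {0..?r}"
      by (rule has_integral_powr_from_0) (use assms in auto)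
    note i1 = i1[unfolded e1] and i2 = i2[unfolded e2]
    show ?thesis
      unfolding Klow_def
      by (rule has_integral_mult_left, rule has_integral_diff[OF i1], rule has_integral_mult_right[OF i2])
  qed
  have nn: "0 \<le> ?g t" if t: "t \<in> {0..?r}" for t
  proof (cases "t = 0")
    case True then show ?thesis by simp
  next
    case False
    then have tp: "0 < t" using t by simp
    have "t^2 \<le> ?r^2" using t tp by (intro power_mono) auto
    then have "real m * t^2 \<le> real m * ?r^2" by (intro mult_left_mono) auto
    also have "\<dots> = 1 / real m" using assms(3) by (simp add: power2_eq_square)
    also have "\<dots> \<le> 1" using assms(3) by simp
    finally have "real m / 12 * t^2 \<le> 1" by simp
    then have "(real m / 12 * t^2) * t powr (2 * ?q - 1) \<le> 1 * t powr (2 * ?q - 1)"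
      by (rule mult_right_mono) simp
    then have "real m / 12 * (t powr (2 * ?q - 1) * t^2) \<le> t powr (2 * ?q - 1)"
      by (simp only: ac_simps mult_1)
    moreover have "t powr (2 * ?q + 1) = t powr (2 * ?q - 1) * t^2"
    proof -
      have E: "2 * ?q + 1 = (2 * ?q - 1) + 2" by simp
      show ?thesis by (simp only: E powr_shift2[OF tp])
    qed
    ultimately show ?thesis by simp
  qed
  have "ennreal (Klow m s) = (\<integral>\<^sup>+ t. ennreal (?g t) * indicator {0..?r} t \<partial>lborel)"
    by (rule nn_integral_has_integral_lebesgue'[OF nn int, symmetric])
  also have "\<dots> \<le> Kn m s"
    unfolding Kn_def by (rule nn_integral_mono) (rule Kf_lower[OF assms])
  finally show ?thesis .
qed

definition Dm :: "real \<Rightarrow> real measure" where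
  "Dm s = density (restrict_space lborel {0<..}) (\<lambda>r. ennreal (r powr (- 1 - 2 * s)))"

lemma inner_r:
  fixes a s :: real assumes m1: "m \<ge> 1"
  shows "(\<integral>\<^sup>+ r. ennreal ((1 - cos (r * a))^m) \<partial>Dm s) = Kn m s * ennreal (\<bar>a\<bar> powr (2 * s))"
proof -
  define J where "J = (\<integral>\<^sup>+ x. ennreal (indicator {0<..} x * ((1 - cos (\<bar>a\<bar> * x))^m * x powr (- 1 - 2 * s))) \<partial>lborel)"
  have "(\<integral>\<^sup>+ r. ennreal ((1 - cos (r * a))^m) \<partial>Dm s)
      = (\<integral>\<^sup>+ r. ennreal (r powr (- 1 - 2 * s)) * ennreal ((1 - cos (r * a))^m) \<partial>restrict_space lborel {0<..})"
    unfolding Dm_def by (rule nn_integral_density; rule measurable_restrict_space1; measurable)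
  also have "\<dots> = (\<integral>\<^sup>+ r. ennreal (r powr (- 1 - 2 * s)) * ennreal ((1 - cos (r * a))^m) * indicator {0<..} r \<partial>lborel)"
    by (rule nn_integral_restrict_space) simp
  also have "\<dots> = J"
    unfolding J_def
  proof (rule nn_integral_cong)
    fix x :: real
    show "ennreal (x powr (- 1 - 2 * s)) * ennreal ((1 - cos (x * a))^m) * indicator {0<..} x
        = ennreal (indicator {0<..} x * ((1 - cos (\<bar>a\<bar> * x))^m * x powr (- 1 - 2 * s)))"
    proof (cases "0 < x")
      case True
      have "cos (x * a) = cos (\<bar>a\<bar> * x)"
        using True cos_abs_real[of "x * a"] by (simp add: abs_mult mult.commute)
      then show ?thesis using True
        by (simp add: ennreal_mult'[symmetric] mult.commute)
    qed simp
  qed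
  finally have L: "(\<integral>\<^sup>+ r. ennreal ((1 - cos (r * a))^m) \<partial>Dm s) = J" .
  show ?thesis
  proof (cases "a = 0")
    case True
    have "J = 0" unfolding J_def using True m1 by (simp add: zero_power)
    then show ?thesis using L True by simp
  next
    case False
    define c where "c = \<bar>a\<bar>"
    have c0: "0 < c" using False by (simp add: c_def)
    have "Kn m s = ennreal c * (\<integral>\<^sup>+ x. ennreal (Kf m s (0 + c * x)) \<partial>lborel)"
      unfolding Kn_def using nn_integral_real_affine[of "\<lambda>t. ennreal (Kf m s t)" c 0] c0 by simp
    also have "(\<integral>\<^sup>+ x. ennreal (Kf m s (0 + c * x)) \<partial>lborel)
        = (\<integral>\<^sup>+ x. ennreal (c powr (- 1 - 2 * s)) * ennreal (indicator {0<..} x * ((1 - cos (\<bar>a\<bar> * x))^m * x powr (- 1 - 2 * s))) \<partial>lborel)"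
    proof (rule nn_integral_cong)
      fix x :: real
      show "ennreal (Kf m s (0 + c * x)) = ennreal (c powr (- 1 - 2 * s)) * ennreal (indicator {0<..} x * ((1 - cos (\<bar>a\<bar> * x))^m * x powr (- 1 - 2 * s)))"
      proof (cases "0 < x")
        case True
        then have "(c * x) powr (- 1 - 2 * s) = c powr (- 1 - 2 * s) * x powr (- 1 - 2 * s)"
          using c0 by (simp add: powr_mult)
        then show ?thesis using True c0
          by (simp add: Kf_def c_def ennreal_mult'[symmetric] mult_ac)
      next
        case False
        then have "\<not> 0 < c * x" using c0 by (simp add: mult_pos_pos zero_less_mult_iff)
        then show ?thesis using False by (simp add: Kf_def)
      qed
    qed
    also have "\<dots> = ennreal (c powr (- 1 - 2 * s)) * J"
      unfolding J_def by (rule nn_integral_cmult) measurable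
    finally have K: "Kn m s = ennreal c * (ennreal (c powr (- 1 - 2 * s)) * J)" .
    have "Kn m s * ennreal (\<bar>a\<bar> powr (2 * s)) = ennreal (c * c powr (- 1 - 2 * s) * c powr (2 * s)) * J"
      unfolding K using c0 by (simp add: c_def ennreal_mult'[symmetric] ennreal_mult[symmetric] mult_ac)
    also have "c * c powr (- 1 - 2 * s) * c powr (2 * s) = 1"
    proof -
      have "c * c powr (- 1 - 2 * s) * c powr (2 * s) = c powr 1 * c powr (- 1 - 2 * s) * c powr (2 * s)"
        using c0 by simp
      also have "\<dots> = c powr (1 + (- 1 - 2 * s) + 2 * s)" by (simp only: powr_add)
      finally show ?thesis using c0 by simp
    qed
    finally show ?thesis using L by simp
  qed
qed

lemma sigma_finite_Dm: "sigma_finite_measure (Dm s)"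
proof -
  have sf: "sigma_finite_measure (restrict_space lborel ({0<..} :: real set))"
    by (rule sigma_finite_measure_restrict_space[OF sigma_finite_lborel]) simp
  show ?thesis unfolding Dm_def
    by (subst sigma_finite_measure.sigma_finite_iff_density_finite[OF sf])
       (auto intro: measurable_restrict_space1)
qed

lemma sphere_facts:
  assumes "borel_prob_on_sphere (\<sigma> :: 'a::euclidean_space measure)"
  shows "prob_space \<sigma>" "sets \<sigma> = sets (restrict_space borel (unit_sphere :: 'a set))"
    "space \<sigma> = unit_sphere"
proof -
  show "prob_space \<sigma>" "sets \<sigma> = sets (restrict_space borel (unit_sphere :: 'a set))"
    using assms by (auto simp: borel_prob_on_sphere_def)
  then show "space \<sigma> = unit_sphere"
    using sets_eq_imp_space_eq by (metis space_borel space_restrict_space inf_top.right_neutral)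
qed

lemma meas_sphere:
  assumes "borel_prob_on_sphere (\<sigma> :: 'a::euclidean_space measure)"
    and "f \<in> borel_measurable (borel :: 'a measure)"
  shows "f \<in> borel_measurable \<sigma>"
  using sphere_facts(2)[OF assms(1)] assms(2)
  by (subst measurable_cong_sets[of \<sigma> "restrict_space borel unit_sphere"]) (auto intro: measurable_restrict_space1)

lemma meas_Dm:
  assumes "f \<in> borel_measurable (borel :: real measure)"
  shows "f \<in> borel_measurable (Dm s)"
  unfolding Dm_def using assms
  by (subst measurable_cong_sets[of _ "restrict_space lborel {0<..}"]) (auto intro: measurable_restrict_space1)

lemma nu_integral:
  fixes \<sigma> :: "'a::euclidean_space measure" and e :: 'a
  assumes bp: "borel_prob_on_sphere \<sigma>" and m1: "m \<ge> 1" and s0: "0 < s"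
  shows "integral\<^sup>L (nu_meas s \<sigma>) (\<lambda>y. (1 - cos (e \<bullet> y))^m) = enn2real (Kn m s) * M_fun s \<sigma> e"
proof -
  note sf = sphere_facts[OF bp]
  interpret P: prob_space \<sigma> by (rule sf(1))
  interpret D: sigma_finite_measure "Dm s" by (rule sigma_finite_Dm)
  interpret PS: pair_sigma_finite "Dm s" \<sigma> by unfold_locales
  let ?phi = "\<lambda>p::real \<times> 'a. fst p *\<^sub>R snd p"
  have nu: "nu_meas s \<sigma> = distr (Dm s \<Otimes>\<^sub>M \<sigma>) borel ?phi"
    unfolding nu_meas_def Dm_def by (simp add: case_prod_beta')
  have id1: "(\<lambda>x::real. x) \<in> borel_measurable (Dm s)" by (rule meas_Dm) simp
  have id2: "(\<lambda>x::'a. x) \<in> borel_measurable \<sigma>" by (rule meas_sphere[OF bp]) simp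
  have phim: "?phi \<in> borel_measurable (Dm s \<Otimes>\<^sub>M \<sigma>)"
    using measurable_compose[OF measurable_fst id1] measurable_compose[OF measurable_snd id2]
    by (intro borel_measurable_scaleR) auto
  have mth: "(\<lambda>\<theta>. \<bar>e \<bullet> \<theta>\<bar> powr (2 * s)) \<in> borel_measurable \<sigma>"
    by (rule meas_sphere[OF bp]) measurable
  let ?g = "\<lambda>y::'a. (1 - cos (e \<bullet> y))^m"
  have gm: "?g \<in> borel_measurable borel" by measurable
  have "integral\<^sup>L (nu_meas s \<sigma>) ?g = enn2real (\<integral>\<^sup>+ y. ennreal (?g y) \<partial>nu_meas s \<sigma>)"
    by (rule integral_eq_nn_integral) (auto simp: nu gm)
  also have "(\<integral>\<^sup>+ y. ennreal (?g y) \<partial>nu_meas s \<sigma>) = (\<integral>\<^sup>+ p. ennreal (?g (?phi p)) \<partial>(Dm s \<Otimes>\<^sub>M \<sigma>))"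
    unfolding nu by (rule nn_integral_distr[OF phim]) (simp add: gm)
  also have "\<dots> = (\<integral>\<^sup>+ \<theta>. (\<integral>\<^sup>+ r. ennreal (?g (?phi (r, \<theta>))) \<partial>Dm s) \<partial>\<sigma>)"
    by (rule PS.nn_integral_snd[symmetric]) (use measurable_compose[OF phim gm] in simp)
  also have "\<dots> = (\<integral>\<^sup>+ \<theta>. Kn m s * ennreal (\<bar>e \<bullet> \<theta>\<bar> powr (2 * s)) \<partial>\<sigma>)"
  proof (rule nn_integral_cong)
    fix \<theta> :: 'a
    show "(\<integral>\<^sup>+ r. ennreal (?g (?phi (r, \<theta>))) \<partial>Dm s) = Kn m s * ennreal (\<bar>e \<bullet> \<theta>\<bar> powr (2 * s))"
      using inner_r[OF m1, where a = "e \<bullet> \<theta>" and s = s] by simp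
  qed
  also have "\<dots> = Kn m s * (\<integral>\<^sup>+ \<theta>. ennreal (\<bar>e \<bullet> \<theta>\<bar> powr (2 * s)) \<partial>\<sigma>)"
    by (rule nn_integral_cmult) (use mth in simp)
  also have "(\<integral>\<^sup>+ \<theta>. ennreal (\<bar>e \<bullet> \<theta>\<bar> powr (2 * s)) \<partial>\<sigma>) = ennreal (M_fun s \<sigma> e)"
    unfolding M_fun_def
  proof (rule nn_integral_eq_integral)
    show "integrable \<sigma> (\<lambda>\<theta>. \<bar>e \<bullet> \<theta>\<bar> powr (2 * s))"
    proof (rule P.integrable_const_bound[where B = "norm e powr (2 * s)"])
      show "AE x in \<sigma>. norm (\<bar>e \<bullet> x\<bar> powr (2 * s)) \<le> norm e powr (2 * s)"
      proof (rule AE_I2)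
        fix x assume "x \<in> space \<sigma>"
        then have "norm x = 1" using sf(3) by simp
        then have "\<bar>e \<bullet> x\<bar> \<le> norm e" using Cauchy_Schwarz_ineq2[of e x] by simp
        then show "norm (\<bar>e \<bullet> x\<bar> powr (2 * s)) \<le> norm e powr (2 * s)"
          using s0 by (simp add: powr_mono2)
      qed
      show "(\<lambda>\<theta>. \<bar>e \<bullet> \<theta>\<bar> powr (2 * s)) \<in> borel_measurable \<sigma>"
        by (rule mth)
    qed
  qed simp
  finally show ?thesis
    by (simp add: enn2real_mult M_fun_def)
qed

lemma M_integrable:
  fixes \<sigma> :: "'a::euclidean_space measure" and e :: 'a
  assumes bp: "borel_prob_on_sphere \<sigma>" and s0: "0 < s"
  shows "integrable \<sigma> (\<lambda>\<theta>. \<bar>e \<bullet> \<theta>\<bar> powr (2 * s))"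
proof -
  note sf = sphere_facts[OF bp]
  interpret P: prob_space \<sigma> by (rule sf(1))
  show ?thesis
  proof (rule P.integrable_const_bound[where B = "norm e powr (2 * s)"])
    show "AE x in \<sigma>. norm (\<bar>e \<bullet> x\<bar> powr (2 * s)) \<le> norm e powr (2 * s)"
    proof (rule AE_I2)
      fix x assume "x \<in> space \<sigma>"
      then have "norm x = 1" using sf(3) by simp
      then have "\<bar>e \<bullet> x\<bar> \<le> norm e" using Cauchy_Schwarz_ineq2[of e x] by simp
      then show "norm (\<bar>e \<bullet> x\<bar> powr (2 * s)) \<le> norm e powr (2 * s)"
        using s0 by (simp add: powr_mono2)
    qed
    show "(\<lambda>\<theta>. \<bar>e \<bullet> \<theta>\<bar> powr (2 * s)) \<in> borel_measurable \<sigma>"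
      by (rule meas_sphere[OF bp]) measurable
  qed
qed

lemma M_pos:
  fixes \<sigma> :: "'a::euclidean_space measure" and e :: 'a
  assumes bp: "borel_prob_on_sphere \<sigma>" and s0: "0 < s"
    and mx: "\<And>e'. e' \<in> unit_sphere \<Longrightarrow> M_fun s \<sigma> e' \<le> M_fun s \<sigma> e"
  shows "0 < M_fun s \<sigma> e"
proof (rule ccontr)
  assume neg: "\<not> 0 < M_fun s \<sigma> e"
  note sf = sphere_facts[OF bp]
  interpret P: prob_space \<sigma> by (rule sf(1))
  have Mb: "AE \<theta> in \<sigma>. b \<bullet> \<theta> = 0" if b: "b \<in> Basis" for b :: 'a
  proof -
    have "b \<in> unit_sphere" using b by simp
    then have "M_fun s \<sigma> b \<le> 0" using mx[of b] neg by simp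
    moreover have "0 \<le> M_fun s \<sigma> b" unfolding M_fun_def by (intro integral_nonneg_AE) simp
    ultimately have "M_fun s \<sigma> b = 0" by simp
    then have "AE \<theta> in \<sigma>. \<bar>b \<bullet> \<theta>\<bar> powr (2 * s) = 0"
      unfolding M_fun_def using integral_nonneg_eq_0_iff_AE[OF M_integrable[OF bp s0, of b]] by simp
    then show ?thesis by (rule eventually_mono) simp
  qed
  then have "AE \<theta> in \<sigma>. \<forall>b\<in>Basis. b \<bullet> \<theta> = 0"
    by (intro eventually_ball_finite finite_Basis) auto
  moreover have "AE \<theta> in \<sigma>. \<theta> \<in> unit_sphere" using sf(3) by (intro AE_I2) simp
  ultimately have "AE \<theta> in \<sigma>. False"
  proof eventually_elim
    case (elim x)
    then have "x = 0" using euclidean_all_zero_iff[of x] by (simp add: inner_commute)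
    then show False using elim by simp
  qed
  then show False using P.AE_False by simp
qed

theorem lemma3p9:
  fixes m :: nat
    and \<sigma> :: "real \<Rightarrow> 'a::euclidean_space measure"
    and e :: "real \<Rightarrow> 'a"
  assumes "m \<ge> 1"
    and "\<And>s. s \<in> {0<..<real m} \<Longrightarrow> borel_prob_on_sphere (\<sigma> s)"
    and "\<And>s. s \<in> {0<..<real m} \<Longrightarrow> e s \<in> unit_sphere"
    and "\<And>s e'. s \<in> {0<..<real m} \<Longrightarrow> e' \<in> unit_sphere \<Longrightarrow>
           M_fun s (\<sigma> s) e' \<le> M_fun s (\<sigma> s) (e s)"
  shows "((\<lambda>s. c_const m s (\<sigma> s) (e s) / (real m - s) * M_fun s (\<sigma> s) (e s))
           \<longlongrightarrow> 4) (at_left (real m))"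
proof -
  note m1 = assms(1)
  define K where "K s = enn2real (Kn m s)" for s
  define L where "L s = (real m - s) * K s" for s
  define fl where "fl s = ((1/real m) powr (2 * (real m - s)) / 2
       - (real m - s) * (real m / 12) * ((1/real m) powr (2 * (real m - s) + 2) / (2 * (real m - s) + 2))) * (1/2^m)" for s
  define fu where "fu s = 1/2 * (1/2^m) + (real m - s) * (2^m / (2 * s))" for s
  have mpos: "0 < real m" using m1 by simp
  have ev: "eventually (\<lambda>s. s \<in> {0<..<real m}) (at_left (real m))"
    by (rule eventually_at_left_real[OF mpos])
  have bounds: "fl s \<le> L s \<and> L s \<le> fu s" if s: "s \<in> {0<..<real m}" for s
  proof -
    have s0: "0 < s" and sm: "s < real m" using s by auto
    have up: "Kn m s \<le> ennreal (1 / (2 * (real m - s)) * (1/2^m) + 2^m / (2 * s))"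
      by (rule Kn_upper[OF s0 sm])
    have lo: "ennreal (Klow m s) \<le> Kn m s" by (rule Kn_lower[OF s0 sm m1])
    have fin: "Kn m s \<noteq> \<infinity>" using up by (auto simp: top_unique)
    have Keq: "Kn m s = ennreal (K s)" unfolding K_def using fin by (simp add: ennreal_enn2real_if)
    have K0: "0 \<le> K s" unfolding K_def by simp
    have Ku: "K s \<le> 1 / (2 * (real m - s)) * (1/2^m) + 2^m / (2 * s)"
      using up unfolding Keq by (subst (asm) ennreal_le_iff) (use s0 sm in auto)
    have Kl: "Klow m s \<le> K s"
    proof (cases "0 \<le> Klow m s")
      case True then show ?thesis using lo unfolding Keq using K0 by (simp add: ennreal_le_iff)
    next
      case False then show ?thesis using K0 by simp
    qed
    have q0: "0 < real m - s" using sm by simp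
    have gen: "q * ((A / (2 * q) - B * (C / (2 * q + 2))) * D) = (A / 2 - q * B * (C / (2 * q + 2))) * D"
      if "0 < q" for q A B C D :: real
    proof -
      have h: "q * (A / (2 * q)) = A / 2" using that by simp
      have "q * ((A / (2 * q) - B * (C / (2 * q + 2))) * D) = (q * (A / (2 * q)) - q * B * (C / (2 * q + 2))) * D"
        by (simp add: algebra_simps)
      then show ?thesis by (simp only: h)
    qed
    have "(real m - s) * Klow m s = fl s"
      unfolding Klow_def fl_def by (rule gen[OF q0])
    moreover have "(real m - s) * (1 / (2 * (real m - s)) * (1/2^m) + 2^m / (2 * s)) = fu s"
      unfolding fu_def using q0 by (simp add: field_simps)
    ultimately show ?thesis
      unfolding L_def using mult_left_mono[OF Kl, of "real m - s"] mult_left_mono[OF Ku, of "real m - s"] q0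
      by simp
  qed
  have lim_fl: "(fl \<longlongrightarrow> 1/2 * (1/2^m)) (at_left (real m))"
    unfolding fl_def using mpos by (auto intro!: tendsto_eq_intros)
  have lim_fu: "(fu \<longlongrightarrow> 1/2 * (1/2^m)) (at_left (real m))"
    unfolding fu_def using mpos by (auto intro!: tendsto_eq_intros)
  have lim_L: "(L \<longlongrightarrow> 1/2 * (1/2^m)) (at_left (real m))"
    by (rule tendsto_sandwich[OF eventually_mono[OF ev] eventually_mono[OF ev] lim_fl lim_fu])
       (use bounds in auto)
  have lim2: "((\<lambda>s. 2 / (2^m * L s)) \<longlongrightarrow> 2 / (2^m * (1/2 * (1/2^m)))) (at_left (real m))"
    by (intro tendsto_intros lim_L) simp
  have four: "2 / (2^m * (1/2 * (1/2^m))) = (4::real)" by simp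
  have eq: "c_const m s (\<sigma> s) (e s) / (real m - s) * M_fun s (\<sigma> s) (e s) = 2 / (2^m * L s)"
    if s: "s \<in> {0<..<real m}" for s
  proof -
    have s0: "0 < s" using s by simp
    have bp: "borel_prob_on_sphere (\<sigma> s)" by (rule assms(2)[OF s])
    have Mp: "0 < M_fun s (\<sigma> s) (e s)"
      by (rule M_pos[OF bp s0]) (rule assms(4)[OF s])
    have "c_const m s (\<sigma> s) (e s) = 2 / (2^m * (K s * M_fun s (\<sigma> s) (e s)))"
      unfolding c_const_def K_def using nu_integral[OF bp m1 s0, of "e s"] by simp
    have gen: "2 / (P * (K' * M)) / q * M = 2 / (P * (q * K'))" if "M \<noteq> 0" for P K' M q :: real
      using that by (cases "K' = 0"; cases "q = 0"; cases "P = 0") (simp_all add: field_simps)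
    show ?thesis unfolding L_def \<open>c_const m s (\<sigma> s) (e s) = _\<close> using Mp
      by (intro gen) simp
  qed
  show ?thesis
    unfolding four[symmetric]
    by (rule tendsto_cong[THEN iffD1, OF _ lim2]) (rule eventually_mono[OF ev], rule eq[symmetric])
qed
end
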